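(* If $\psi\in LFD$ is satisfiable (in some dependence model at some assignment) and $|V_\psi|=k$, then there is a dependence model $\mathbb{M}=(M,A)$ for the vocabulary $(V_\psi,\tau_\psi)$ such that $M$ is a $k$-tree of finite branching degree and $\mathbb{M},s\models\psi$ for some $s\in A$.
   Context: The language $LFD[V,\tau]$ is generated by $\varphi::=P\mathbf{x}\mid\neg\varphi\mid\varphi\wedge\varphi\mid\mathbb{D}_X\varphi\mid D_Xy$, with $X\subseteq V$ finite, $y\in V$, $P\in\tau$, $\mathbf{x}\in V^{ar(P)}$. $V_\psi$ is the set of variables occurring in $\psi$ and $\tau_\psi$ the set of predicates occurring in $\psi$. A dependence model is a pair $\mathbb{M}=(M,A)$ with $M$ a $\tau$-structure with domain $O$ and $A\subseteq O^V$. Semantics at $s\in A$: $s\models P\mathbf{x}$ iff $s(\mathbf{x})\in P^M$; Booleans as usual; $s\models\mathbb{D}_X\varphi$ iff $t\models\varphi$ for all $t\in A$ with $s\restriction X=t\restriction X$; $s\models D_Xy$ iff for all $t\in A$, $s\restriction X=t\restriction X$ implies $s(y)=t(y)$. A tuple $\mathbf{a}=(a_1,\dots,a_r)$ from $M$ is live if $M\models P\mathbf{a}$ for some $r$-ary $P\in\tau$. $M$ is a $k$-tree if there is a tree (acyclic connected graph) $T=(N,E)$ and a map $F$ assigning to each node a subset of the domain of $M$ of size at most $k$ such that (i) for every live tuple $\mathbf{a}$ there is a node $u$ with $\{a_1,\dots,a_r\}\subseteq F(u)$, and (ii) for every element $a$ the set $\{u\mid a\in F(u)\}$ is connected in $T$.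 $M$ has finite branching degree if $T$ can be chosen so that every node has finitely many neighbours. *)

theory Defs
  imports "HOL-Library.FuncSet"
begin

text \<open>Variables of type 'v, predicate symbols of type 'p. The finite set X in
  D_X and the dependence atom is given as a list (hence finite).\<close>

datatype ('v, 'p) lfd =
    Pred 'p "'v list"
  | Neg "('v, 'p) lfd"
  | Conj "('v, 'p) lfd" "('v, 'p) lfd"
  | Dall "'v list" "('v, 'p) lfd"
  | Dep "'v list" 'v

fun vars :: "('v, 'p) lfd \<Rightarrow> 'v set" where
  "vars (Pred P xs) = set xs"
| "vars (Neg \<phi>) = vars \<phi>"
| "vars (Conj \<phi> \<chi>) = vars \<phi> \<union> vars \<chi>"
| "vars (Dall X \<phi>) = set X \<union> vars \<phi>"
| "vars (Dep X y) = insert y (set X)"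

fun preds :: "('v, 'p) lfd \<Rightarrow> 'p set" where
  "preds (Pred P xs) = {P}"
| "preds (Neg \<phi>) = preds \<phi>"
| "preds (Conj \<phi> \<chi>) = preds \<phi> \<union> preds \<chi>"
| "preds (Dall X \<phi>) = preds \<phi>"
| "preds (Dep X y) = {}"

fun wf_lfd :: "('p \<Rightarrow> nat) \<Rightarrow> ('v, 'p) lfd \<Rightarrow> bool" where
  "wf_lfd ar (Pred P xs) = (length xs = ar P)"
| "wf_lfd ar (Neg \<phi>) = wf_lfd ar \<phi>"
| "wf_lfd ar (Conj \<phi> \<chi>) = (wf_lfd ar \<phi> \<and> wf_lfd ar \<chi>)"
| "wf_lfd ar (Dall X \<phi>) = wf_lfd ar \<phi>"
| "wf_lfd ar (Dep X y) = True"

definition tau_structure :: "('p \<Rightarrow> nat) \<Rightarrow> 'p set \<Rightarrow> 'a set \<Rightarrow> ('p \<Rightarrow> 'a list set) \<Rightarrow> bool" where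
  "tau_structure ar \<tau> Dom I \<longleftrightarrow> Dom \<noteq> {} \<and>
     (\<forall>P\<in>\<tau>. \<forall>as\<in>I P. length as = ar P \<and> set as \<subseteq> Dom) \<and>
     (\<forall>P. P \<notin> \<tau> \<longrightarrow> I P = {})"

definition dep_model ::
  "('p \<Rightarrow> nat) \<Rightarrow> 'v set \<Rightarrow> 'p set \<Rightarrow> 'a set \<Rightarrow> ('p \<Rightarrow> 'a list set) \<Rightarrow> ('v \<Rightarrow> 'a) set \<Rightarrow> bool" where
  "dep_model ar V \<tau> Dom I A \<longleftrightarrow> tau_structure ar \<tau> Dom I \<and> A \<subseteq> (V \<rightarrow>\<^sub>E Dom)"

fun sat :: "('v \<Rightarrow> 'a) set \<Rightarrow> ('p \<Rightarrow> 'a list set) \<Rightarrow> ('v \<Rightarrow> 'a) \<Rightarrow> ('v, 'p) lfd \<Rightarrow> bool" where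
  "sat A I s (Pred P xs) = (map s xs \<in> I P)"
| "sat A I s (Neg \<phi>) = (\<not> sat A I s \<phi>)"
| "sat A I s (Conj \<phi> \<chi>) = (sat A I s \<phi> \<and> sat A I s \<chi>)"
| "sat A I s (Dall X \<phi>) = (\<forall>t\<in>A. (\<forall>x\<in>set X. s x = t x) \<longrightarrow> sat A I t \<phi>)"
| "sat A I s (Dep X y) = (\<forall>t\<in>A. (\<forall>x\<in>set X. s x = t x) \<longrightarrow> s y = t y)"

text \<open>Undirected graphs on node sets N (nodes are natural numbers; a finitely
  branching tree is countable) with symmetric irreflexive edge relation E.\<close>

definition connected_in :: "(nat \<Rightarrow> nat \<Rightarrow> bool) \<Rightarrow> nat set \<Rightarrow> bool" where
  "connected_in E S \<longleftrightarrow>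
     (\<forall>u\<in>S. \<forall>v\<in>S. (\<lambda>x y. E x y \<and> x \<in> S \<and> y \<in> S)\<^sup>*\<^sup>* u v)"

definition has_cycle :: "(nat \<Rightarrow> nat \<Rightarrow> bool) \<Rightarrow> bool" where
  "has_cycle E \<longleftrightarrow> (\<exists>cs. length cs \<ge> 3 \<and> distinct cs \<and>
     (\<forall>i < length cs. E (cs ! i) (cs ! (Suc i mod length cs))))"

definition is_tree :: "nat set \<Rightarrow> (nat \<Rightarrow> nat \<Rightarrow> bool) \<Rightarrow> bool" where
  "is_tree N E \<longleftrightarrow> N \<noteq> {} \<and>
     (\<forall>u v. E u v \<longrightarrow> u \<in> N \<and> v \<in> N \<and> u \<noteq> v \<and> E v u) \<and>
     connected_in E N \<and> \<not> has_cycle E"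

definition live :: "'p set \<Rightarrow> ('p \<Rightarrow> 'a list set) \<Rightarrow> 'a list \<Rightarrow> bool" where
  "live \<tau> I as \<longleftrightarrow> (\<exists>P\<in>\<tau>. as \<in> I P)"

definition k_tree_fb :: "nat \<Rightarrow> 'p set \<Rightarrow> 'a set \<Rightarrow> ('p \<Rightarrow> 'a list set) \<Rightarrow> bool" where
  "k_tree_fb k \<tau> Dom I \<longleftrightarrow> (\<exists>(N :: nat set) E (F :: nat \<Rightarrow> 'a set).
     is_tree N E \<and>
     (\<forall>u\<in>N. finite {v \<in> N. E u v}) \<and>
     (\<forall>u\<in>N. F u \<subseteq> Dom \<and> finite (F u) \<and> card (F u) \<le> k) \<and>
     (\<forall>as. live \<tau> I as \<longrightarrow> (\<exists>u\<in>N. set as \<subseteq> F u)) \<and>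
     (\<forall>a\<in>Dom. connected_in E {u \<in> N. a \<in> F u}))"

end

theory Submission
  imports Defs "HOL-Library.Nat_Bijection"
begin


fun subs :: "('v,'p) lfd \<Rightarrow> ('v,'p) lfd list" where
  "subs (Pred P xs) = [Pred P xs]"
| "subs (Neg \<phi>) = Neg \<phi> # subs \<phi>"
| "subs (Conj \<phi> \<chi>) = Conj \<phi> \<chi> # subs \<phi> @ subs \<chi>"
| "subs (Dall X \<phi>) = Dall X \<phi> # subs \<phi>"
| "subs (Dep X y) = [Dep X y]"

fun labX :: "('v,'p) lfd \<Rightarrow> 'v list" where
  "labX (Dall X \<phi>) = X" | "labX (Dep X y) = X" | "labX _ = []"

fun badf :: "('v \<Rightarrow> 'a) set \<Rightarrow> ('p \<Rightarrow> 'a list set) \<Rightarrow> ('v,'p) lfd \<Rightarrow> ('v \<Rightarrow> 'a) \<Rightarrow> ('v \<Rightarrow> 'a) \<Rightarrow> bool" where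
  "badf A I (Dall X \<phi>) s t = (\<not> sat A I t \<phi>)"
| "badf A I (Dep X y) s t = (t y \<noteq> s y)"
| "badf A I _ s t = False"

definition agree :: "'v list \<Rightarrow> ('v \<Rightarrow> 'a) \<Rightarrow> ('v \<Rightarrow> 'a) \<Rightarrow> bool" where
  "agree X s t \<longleftrightarrow> (\<forall>x\<in>set X. s x = t x)"

definition wit where
  "wit A I items s i = (if \<exists>t\<in>A. agree (labX (items!i)) s t \<and> badf A I (items!i) s t
     then SOME t. t\<in>A \<and> agree (labX (items!i)) s t \<and> badf A I (items!i) s t else s)"

lemma wit_props:
  assumes "s \<in> A"
  shows "wit A I items s i \<in> A \<and> agree (labX (items!i)) s (wit A I items s i) \<and>
    ((\<exists>t\<in>A. agree (labX (items!i)) s t \<and> badf A I (items!i) s t) \<longrightarrow> badf A I (items!i) s (wit A I items s i))"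
proof (cases "\<exists>t. t\<in>A \<and> agree (labX (items!i)) s t \<and> badf A I (items!i) s t")
  case True
  then have "(\<lambda>t. t\<in>A \<and> agree (labX (items!i)) s t \<and> badf A I (items!i) s t) (SOME t. t\<in>A \<and> agree (labX (items!i)) s t \<and> badf A I (items!i) s t)"
    by (rule someI_ex)
  then show ?thesis using True unfolding wit_def by auto
next
  case False
  then show ?thesis using assms unfolding wit_def by (auto simp: agree_def)
qed

lemma dep_class:
  "t \<in> A \<Longrightarrow> u \<in> A \<Longrightarrow> \<forall>x\<in>set X. t x = u x \<Longrightarrow> sat A I t (Dep X y) \<Longrightarrow> sat A I u (Dep X y)"
  by simp metis

lemma finite_vars: "finite (vars \<phi>)"
  by (induct \<phi>) auto

locale unrav =
  fixes A :: "('v \<Rightarrow> 'a) set" and I :: "'p \<Rightarrow> 'a list set" and s0 :: "'v \<Rightarrow> 'a"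
    and items :: "('v,'p) lfd list" and Vs :: "'v set" and Ps :: "'p set" and f :: "'v \<Rightarrow> nat"
  assumes s0A: "s0 \<in> A" and injf: "inj_on f Vs"
begin

fun proj :: "nat list \<Rightarrow> 'v \<Rightarrow> 'a" where
  "proj [] = s0"
| "proj (i # \<pi>) = wit A I items (proj \<pi>) i"

definition Dh :: "nat list \<Rightarrow> nat \<Rightarrow> 'v \<Rightarrow> bool" where
  "Dh \<pi> i z \<longleftrightarrow> sat A I (proj \<pi>) (Dep (labX (items!i)) z)"

fun orig :: "'v \<Rightarrow> nat list \<Rightarrow> nat list" where
  "orig x [] = []"
| "orig x (i # \<pi>) = (if Dh \<pi> i x then orig x \<pi> else i # \<pi>)"

lemma proj_A: "proj \<pi> \<in> A"
  by (induct \<pi>) (auto simp: s0A wit_props)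

lemma proj_step_eq: "Dh \<pi> i z \<Longrightarrow> proj (i#\<pi>) z = proj \<pi> z"
  using wit_props[OF proj_A[of \<pi>], where i=i and I=I and items=items] unfolding Dh_def agree_def
  by simp metis

lemma orig_proj: "proj (orig x \<pi>) x = proj \<pi> x"
  by (induct \<pi>) (auto simp: proj_step_eq simp del: proj.simps)

lemma orig_suffix: "\<exists>zs. \<pi> = zs @ orig x \<pi>"
  by (induct \<pi>) (auto, metis append_Cons)

lemma orig_orig: "orig x (orig x \<pi>) = orig x \<pi>"
  by (induct \<pi>) auto

lemma orig_label: "x \<in> set (labX (items!i)) \<Longrightarrow> Dh \<pi> i x"
  unfolding Dh_def by simp

lemma orig_dep:
  "(\<forall>x\<in>set X. orig x \<pi> = orig x \<pi>') \<Longrightarrow> sat A I (proj \<pi>) (Dep X y) \<Longrightarrow> orig y \<pi> = orig y \<pi>'"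
proof (induction "length \<pi> + length \<pi>'" arbitrary: \<pi> \<pi>' rule: less_induct)
  case less
  have key: "orig y a = orig y b"
    if len: "length b \<le> length a" and ne: "a \<noteq> b" and sum: "length a + length b = length \<pi> + length \<pi>'"
      and ag: "\<forall>x\<in>set X. orig x a = orig x b" and dp: "sat A I (proj a) (Dep X y)" for a b
  proof -
    obtain i \<rho> where a: "a = i # \<rho>" using len ne by (cases a) auto
    have D: "Dh \<rho> i x" if x: "x \<in> set X" for x
    proof (rule ccontr)
      assume "\<not> Dh \<rho> i x"
      then have "orig x a = a" using a by simp
      then have "orig x b = a" using ag x by simp
      then obtain zs where "b = zs @ a" using orig_suffix[of b x] by metis
      then show False using len ne by simp
    qed
    have oa: "orig x a = orig x \<rho>" if "x \<in> set X" for x using D[OF that] a by simp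
    have pa: "proj a x = proj \<rho> x" if "x \<in> set X" for x using D[OF that] a proj_step_eq by simp
    have dp2: "sat A I (proj \<rho>) (Dep X y)"
      by (rule dep_class[OF proj_A proj_A _ dp]) (use pa in auto)
    have ih: "orig y \<rho> = orig y b"
      using less.hyps[of \<rho> b] sum a ag oa dp2 by simp
    have "Dh \<rho> i y"
      unfolding Dh_def
    proof (simp, intro ballI impI)
      fix t assume tA: "t \<in> A" and ag2: "\<forall>x\<in>set (labX (items ! i)). proj \<rho> x = t x"
      have "\<forall>x\<in>set X. proj \<rho> x = t x"
      proof
        fix x assume x: "x \<in> set X"
        then show "proj \<rho> x = t x" using D[OF x] tA ag2 unfolding Dh_def by simp
      qed
      then show "proj \<rho> y = t y" using dp2 tA by simp
    qed
    then show ?thesis using a ih by simp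
  qed
  show ?case
  proof (cases "\<pi> = \<pi>'")
    case True then show ?thesis by simp
  next
    case False
    have pe: "proj \<pi> x = proj \<pi>' x" if "x \<in> set X" for x
      using orig_proj[of x \<pi>] orig_proj[of x \<pi>'] less.prems(1) that by metis
    have dp': "sat A I (proj \<pi>') (Dep X y)"
      by (rule dep_class[OF proj_A proj_A _ less.prems(2)]) (use pe in auto)
    show ?thesis
    proof (cases "length \<pi>' \<le> length \<pi>")
      case True then show ?thesis using key False less.prems by blast
    next
      case F2: False
      have "orig y \<pi>' = orig y \<pi>"
        by (rule key) (use F2 False less.prems dp' in auto)
      then show ?thesis by simp
    qed
  qed
qed

end


context unrav
begin

definition elem :: "nat list \<Rightarrow> 'v \<Rightarrow> 'a list" where
  "elem \<pi> x = replicate (Suc (prod_encode (f x, list_encode (orig x \<pi>)))) undefined"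

definition asg :: "nat list \<Rightarrow> 'v \<Rightarrow> 'a list" where
  "asg \<pi> = (\<lambda>x. if x \<in> Vs then elem \<pi> x else undefined)"

definition Paths :: "nat list set" where
  "Paths = {\<pi>. \<forall>i\<in>set \<pi>. i < length items}"

definition Au :: "('v \<Rightarrow> 'a list) set" where
  "Au = asg ` Paths"

definition Iu :: "'p \<Rightarrow> 'a list list set" where
  "Iu P = (if P \<in> Ps then {map (asg \<pi>) xs | \<pi> xs. \<pi> \<in> Paths \<and> set xs \<subseteq> Vs \<and> map (proj \<pi>) xs \<in> I P} else {})"

lemma elem_eq: "x \<in> Vs \<Longrightarrow> y \<in> Vs \<Longrightarrow> elem \<pi> x = elem \<pi>' y \<longleftrightarrow> x = y \<and> orig x \<pi> = orig y \<pi>'"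
proof
  assume x: "x \<in> Vs" and y: "y \<in> Vs" and e: "elem \<pi> x = elem \<pi>' y"
  then have "length (elem \<pi> x) = length (elem \<pi>' y)" by simp
  then have "f x = f y \<and> orig x \<pi> = orig y \<pi>'" unfolding elem_def by (simp add: list_encode_eq)
  then show "x = y \<and> orig x \<pi> = orig y \<pi>'" using injf x y by (auto dest: inj_onD)
qed (auto simp add: elem_def)

lemma asg_eq: "x \<in> Vs \<Longrightarrow> asg \<pi> x = asg \<pi>' x \<longleftrightarrow> orig x \<pi> = orig x \<pi>'"
  unfolding asg_def using elem_eq by simp

lemma sat_unrav:
  "set (subs \<phi>) \<subseteq> set items \<Longrightarrow> vars \<phi> \<subseteq> Vs \<Longrightarrow> preds \<phi> \<subseteq> Ps \<Longrightarrow> \<pi> \<in> Paths \<Longrightarrow>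
   sat Au Iu (asg \<pi>) \<phi> \<longleftrightarrow> sat A I (proj \<pi>) \<phi>"
proof (induction \<phi> arbitrary: \<pi>)
  case (Pred P xs)
  have PP: "P \<in> Ps" using Pred by simp
  have xs: "set xs \<subseteq> Vs" using Pred by simp
  show ?case
  proof
    assume "sat Au Iu (asg \<pi>) (Pred P xs)"
    then obtain \<pi>' ys where eq: "map (asg \<pi>) xs = map (asg \<pi>') ys" and p': "\<pi>' \<in> Paths"
      and ys: "set ys \<subseteq> Vs" and I: "map (proj \<pi>') ys \<in> I P"
      using PP by (auto simp: Iu_def)
    have len: "length xs = length ys" using eq map_eq_imp_length_eq by blast
    have "map (proj \<pi>) xs = map (proj \<pi>') ys"
    proof (rule nth_equalityI)
      show "length (map (proj \<pi>) xs) = length (map (proj \<pi>') ys)" using len by simp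
      fix j assume j: "j < length (map (proj \<pi>) xs)"
      have xj: "xs!j \<in> Vs" and yj: "ys!j \<in> Vs" using xs ys j len by auto
      have "asg \<pi> (xs!j) = asg \<pi>' (ys!j)" using eq j len
        by (metis length_map nth_map)
      then have "elem \<pi> (xs!j) = elem \<pi>' (ys!j)" using xj yj by (simp add: asg_def)
      then have "xs!j = ys!j \<and> orig (xs!j) \<pi> = orig (ys!j) \<pi>'" using elem_eq xj yj by blast
      then have "proj \<pi> (xs!j) = proj \<pi>' (ys!j)" using orig_proj by metis
      then show "map (proj \<pi>) xs ! j = map (proj \<pi>') ys ! j" using j len by simp
    qed
    then show "sat A I (proj \<pi>) (Pred P xs)" using I by simp
  next
    assume "sat A I (proj \<pi>) (Pred P xs)"
    then show "sat Au Iu (asg \<pi>) (Pred P xs)" using PP xs Pred.prems(4) by (auto simp: Iu_def)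
  qed
next
  case (Neg \<phi>) then show ?case by simp
next
  case (Conj \<phi>1 \<phi>2) then show ?case by simp
next
  case (Dall X \<phi>)
  have X: "set X \<subseteq> Vs" using Dall.prems by simp
  obtain i where i: "i < length items" "items!i = Dall X \<phi>"
    using Dall.prems(1) by (auto simp: in_set_conv_nth)
  have IH: "\<And>\<pi>. \<pi> \<in> Paths \<Longrightarrow> sat Au Iu (asg \<pi>) \<phi> \<longleftrightarrow> sat A I (proj \<pi>) \<phi>"
    using Dall by simp
  show ?case
  proof
    assume L: "sat Au Iu (asg \<pi>) (Dall X \<phi>)"
    show "sat A I (proj \<pi>) (Dall X \<phi>)"
    proof (rule ccontr)
      assume "\<not> sat A I (proj \<pi>) (Dall X \<phi>)"
      then have ex: "\<exists>t\<in>A. agree (labX (items!i)) (proj \<pi>) t \<and> badf A I (items!i) (proj \<pi>) t"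
        using i by (auto simp: agree_def)
      let ?p = "i # \<pi>"
      have p: "?p \<in> Paths" using i Dall.prems(4) by (simp add: Paths_def)
      have bad: "\<not> sat A I (proj ?p) \<phi>"
        using wit_props[OF proj_A[of \<pi>], where i=i and I=I and items=items] ex i by simp
      have "\<forall>x\<in>set X. asg \<pi> x = asg ?p x"
      proof
        fix x assume x: "x \<in> set X"
        then have "Dh \<pi> i x" using orig_label i by simp
        then show "asg \<pi> x = asg ?p x" using asg_eq X x by auto
      qed
      then have "sat Au Iu (asg ?p) \<phi>" using L p by (auto simp: Au_def)
      then show False using IH[OF p] bad by simp
    qed
  next
    assume R: "sat A I (proj \<pi>) (Dall X \<phi>)"
    show "sat Au Iu (asg \<pi>) (Dall X \<phi>)"
    proof (simp, intro ballI impI)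
      fix t assume "t \<in> Au" and ag: "\<forall>x\<in>set X. asg \<pi> x = t x"
      then obtain \<pi>' where p': "\<pi>' \<in> Paths" and t: "t = asg \<pi>'" by (auto simp: Au_def)
      have "\<forall>x\<in>set X. proj \<pi> x = proj \<pi>' x"
      proof
        fix x assume x: "x \<in> set X"
        then have "orig x \<pi> = orig x \<pi>'" using ag t asg_eq X by blast
        then show "proj \<pi> x = proj \<pi>' x" using orig_proj by metis
      qed
      then have "sat A I (proj \<pi>') \<phi>" using R proj_A by simp
      then show "sat Au Iu t \<phi>" using IH[OF p'] t by simp
    qed
  qed
next
  case (Dep X y)
  have X: "set X \<subseteq> Vs" and y: "y \<in> Vs" using Dep.prems by auto
  obtain i where i: "i < length items" "items!i = Dep X y"
    using Dep.prems(1) by (auto simp: in_set_conv_nth)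
  show ?case
  proof
    assume L: "sat Au Iu (asg \<pi>) (Dep X y)"
    show "sat A I (proj \<pi>) (Dep X y)"
    proof (rule ccontr)
      assume "\<not> sat A I (proj \<pi>) (Dep X y)"
      then have ex: "\<exists>t\<in>A. agree (labX (items!i)) (proj \<pi>) t \<and> badf A I (items!i) (proj \<pi>) t"
        using i by (auto simp: agree_def)
      let ?p = "i # \<pi>"
      have p: "?p \<in> Paths" using i Dep.prems(4) by (simp add: Paths_def)
      have bad: "proj ?p y \<noteq> proj \<pi> y"
        using wit_props[OF proj_A[of \<pi>], where i=i and I=I and items=items] ex i by simp
      have "\<forall>x\<in>set X. asg \<pi> x = asg ?p x"
      proof
        fix x assume x: "x \<in> set X"
        then have "Dh \<pi> i x" using orig_label i by simp
        then show "asg \<pi> x = asg ?p x" using asg_eq X x by auto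
      qed
      then have "asg \<pi> y = asg ?p y" using L p by (auto simp: Au_def)
      then have "orig y \<pi> = orig y ?p" using asg_eq y by blast
      then have "proj \<pi> y = proj ?p y" using orig_proj by metis
      then show False using bad by simp
    qed
  next
    assume R: "sat A I (proj \<pi>) (Dep X y)"
    show "sat Au Iu (asg \<pi>) (Dep X y)"
    proof (simp, intro ballI impI)
      fix t assume "t \<in> Au" and ag: "\<forall>x\<in>set X. asg \<pi> x = t x"
      then obtain \<pi>' where p': "\<pi>' \<in> Paths" and t: "t = asg \<pi>'" by (auto simp: Au_def)
      have "\<forall>x\<in>set X. orig x \<pi> = orig x \<pi>'" using ag t asg_eq X by blast
      then have "orig y \<pi> = orig y \<pi>'" using orig_dep R by blast
      then show "asg \<pi> y = t y" using asg_eq y t by simp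
    qed
  qed
qed

end


lemma rtranclp_sym:
  assumes sym: "\<And>x y. R x y \<Longrightarrow> R y x" and "R\<^sup>*\<^sup>* a b" shows "R\<^sup>*\<^sup>* b a"
  using assms(2)
proof (induction rule: rtranclp_induct)
  case base then show ?case by simp
next
  case (step y z)
  then show ?case using sym by (meson converse_rtranclp_into_rtranclp)
qed

lemma conn_via:
  assumes sym: "\<And>x y. E x y \<Longrightarrow> E y x"
    and r: "\<And>u. u \<in> S \<Longrightarrow> (\<lambda>x y. E x y \<and> x \<in> S \<and> y \<in> S)\<^sup>*\<^sup>* rt u"
  shows "connected_in E S"
  unfolding connected_in_def
proof (intro ballI)
  fix u v assume u: "u \<in> S" and v: "v \<in> S"
  let ?R = "\<lambda>x y. E x y \<and> x \<in> S \<and> y \<in> S"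
  have "?R\<^sup>*\<^sup>* u rt" by (rule rtranclp_sym[OF _ r[OF u]]) (use sym in blast)
  then show "?R\<^sup>*\<^sup>* u v" using r[OF v] by simp
qed

lemma ex_max_idx: "0 < n \<Longrightarrow> \<exists>j<n. \<forall>j'<n. (g::nat\<Rightarrow>nat) j' \<le> g j"
proof (induction n)
  case 0 then show ?case by simp
next
  case (Suc n)
  show ?case
  proof (cases "n = 0")
    case True then show ?thesis by auto
  next
    case False
    then obtain j where j: "j < n" "\<forall>j'<n. g j' \<le> g j" using Suc by auto
    show ?thesis
    proof (cases "g n \<le> g j")
      case True then show ?thesis using j by (metis less_Suc_eq less_SucI)
    next
      case False then show ?thesis using j
        by (metis le_less_linear less_Suc_eq less_imp_le order.strict_trans2 lessI)
    qed
  qed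
qed

context unrav
begin

definition Nu :: "nat set" where "Nu = {u. list_decode u \<in> Paths}"

definition Eu :: "nat \<Rightarrow> nat \<Rightarrow> bool" where
  "Eu u v \<longleftrightarrow> list_decode u \<in> Paths \<and> list_decode v \<in> Paths \<and>
     ((\<exists>i. list_decode v = i # list_decode u) \<or> (\<exists>i. list_decode u = i # list_decode v))"

definition Fu :: "nat \<Rightarrow> 'a list set" where "Fu u = elem (list_decode u) ` Vs"

definition Domu :: "'a list set" where
  "Domu = insert [] {elem \<pi> x | \<pi> x. \<pi> \<in> Paths \<and> x \<in> Vs}"

lemma Eu_sym: "Eu u v \<Longrightarrow> Eu v u" unfolding Eu_def by blast

lemma Paths_tl: "i # \<pi> \<in> Paths \<Longrightarrow> \<pi> \<in> Paths" by (simp add: Paths_def)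

lemma root_reach: "\<pi> \<in> Paths \<Longrightarrow>
  (\<lambda>x y. Eu x y \<and> x \<in> Nu \<and> y \<in> Nu)\<^sup>*\<^sup>* (list_encode []) (list_encode \<pi>)"
proof (induction \<pi>)
  case Nil then show ?case by simp
next
  case (Cons i \<pi>)
  have p: "\<pi> \<in> Paths" using Cons.prems Paths_tl by blast
  have st: "(\<lambda>x y. Eu x y \<and> x \<in> Nu \<and> y \<in> Nu) (list_encode \<pi>) (list_encode (i#\<pi>))"
    using p Cons.prems by (simp add: Eu_def Nu_def)
  show ?case by (rule rtranclp.rtrancl_into_rtrancl[OF Cons.IH[OF p] st])
qed

lemma orig_reach:
  assumes S: "S = {u \<in> Nu. orig x (list_decode u) = oz}"
  shows "\<rho> \<in> Paths \<Longrightarrow> orig x \<rho> = oz \<Longrightarrow>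
  (\<lambda>u v. Eu u v \<and> u \<in> S \<and> v \<in> S)\<^sup>*\<^sup>* (list_encode oz) (list_encode \<rho>)"
proof (induction \<rho>)
  case Nil then show ?case by simp
next
  case (Cons i \<rho>)
  show ?case
  proof (cases "Dh \<rho> i x")
    case False then show ?thesis using Cons.prems by simp
  next
    case True
    have p: "\<rho> \<in> Paths" using Cons.prems Paths_tl by blast
    have o: "orig x \<rho> = oz" using Cons.prems True by simp
    have "Eu (list_encode \<rho>) (list_encode (i#\<rho>))" using p Cons.prems by (simp add: Eu_def)
    moreover have "list_encode \<rho> \<in> S" "list_encode (i#\<rho>) \<in> S"
      using S p o Cons.prems by (auto simp: Nu_def)
    ultimately have st: "(\<lambda>u v. Eu u v \<and> u \<in> S \<and> v \<in> S) (list_encode \<rho>) (list_encode (i#\<rho>))"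
      by blast
    show ?thesis by (rule rtranclp.rtrancl_into_rtrancl[OF Cons.IH[OF p o] st])
  qed
qed

lemma no_cycle: "\<not> has_cycle Eu"
proof
  assume "has_cycle Eu"
  then obtain cs where n3: "length cs \<ge> 3" and d: "distinct cs"
    and e: "\<forall>i < length cs. Eu (cs ! i) (cs ! (Suc i mod length cs))"
    unfolding has_cycle_def by blast
  define n where "n = length cs"
  define L where "L = (\<lambda>j. length (list_decode (cs!j)))"
  have n0: "0 < n" using n3 unfolding n_def by linarith
  obtain j where j: "j < n" and jm: "\<forall>j'<n. L j' \<le> L j"
    using ex_max_idx[OF n0, of L] by blast
  define q where "q = Suc j mod n"
  define p where "p = (if j = 0 then n - 1 else j - 1)"
  have q: "q < n" using j unfolding q_def by simp
  have p: "p < n" "Suc p mod n = j" using j n3 unfolding p_def n_def by auto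
  have e1: "Eu (cs!j) (cs!q)" using e j unfolding q_def n_def by simp
  have e2: "Eu (cs!p) (cs!j)" using e p unfolding n_def by metis
  have a1: "list_decode (cs!q) = tl (list_decode (cs!j))"
  proof -
    from e1 consider (a) i where "list_decode (cs!q) = i # list_decode (cs!j)"
      | (b) i where "list_decode (cs!j) = i # list_decode (cs!q)" unfolding Eu_def by blast
    then show ?thesis
    proof cases
      case a then have "L q > L j" unfolding L_def by simp
      then show ?thesis using jm q by (simp add: not_le[symmetric])
    next
      case b then show ?thesis by simp
    qed
  qed
  have a2: "list_decode (cs!p) = tl (list_decode (cs!j))"
  proof -
    from e2 consider (a) i where "list_decode (cs!j) = i # list_decode (cs!p)"
      | (b) i where "list_decode (cs!p) = i # list_decode (cs!j)" unfolding Eu_def by blast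
    then show ?thesis
    proof cases
      case b then have "L p > L j" unfolding L_def by simp
      then show ?thesis using jm p by (simp add: not_le[symmetric])
    next
      case a then show ?thesis by simp
    qed
  qed
  have "cs!q = cs!p" using a1 a2 by (metis list_decode_inverse)
  then have "q = p" using d q p(1) unfolding n_def by (simp add: nth_eq_iff_index_eq)
  then have "Suc j mod n = p" unfolding q_def .
  then show False using p(2) j n3 unfolding p_def n_def
    by (cases "j = 0"; cases "Suc j = length cs") (auto simp: mod_Suc split: if_splits)
qed

end


context unrav
begin

lemma ktree:
  assumes fin: "finite Vs"
  shows "k_tree_fb (card Vs) Ps Domu Iu"
  unfolding k_tree_fb_def
proof (intro exI conjI)
  show "is_tree Nu Eu"
    unfolding is_tree_def
  proof (intro conjI)
    have "list_encode [] \<in> Nu" by (simp only: Nu_def mem_Collect_eq list_encode_inverse) (simp add: Paths_def)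
    then show "Nu \<noteq> {}" by blast
  next
    show "\<forall>u v. Eu u v \<longrightarrow> u \<in> Nu \<and> v \<in> Nu \<and> u \<noteq> v \<and> Eu v u"
      unfolding Eu_def Nu_def by auto
  next
    show "connected_in Eu Nu"
    proof (rule conn_via[where rt="list_encode []"])
      show "\<And>x y. Eu x y \<Longrightarrow> Eu y x" by (rule Eu_sym)
      fix u assume "u \<in> Nu"
      then show "(\<lambda>x y. Eu x y \<and> x \<in> Nu \<and> y \<in> Nu)\<^sup>*\<^sup>* (list_encode []) u"
        using root_reach[of "list_decode u"] by (simp add: Nu_def)
    qed
  next
    show "\<not> has_cycle Eu" by (rule no_cycle)
  qed
next
  show "\<forall>u\<in>Nu. finite {v \<in> Nu. Eu u v}"
  proof
    fix u
    have "{v \<in> Nu. Eu u v} \<subseteq> list_encode ` ({tl (list_decode u)} \<union> (\<lambda>i. i # list_decode u) ` {..<length items})"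
    proof
      fix v assume v: "v \<in> {v \<in> Nu. Eu u v}"
      then have "Eu u v" by simp
      then consider (a) i where "list_decode v = i # list_decode u" "list_decode v \<in> Paths"
        | (b) i where "list_decode u = i # list_decode v" unfolding Eu_def by blast
      then show "v \<in> list_encode ` ({tl (list_decode u)} \<union> (\<lambda>i. i # list_decode u) ` {..<length items})"
      proof cases
        case a
        then have "i < length items" by (simp add: Paths_def)
        then show ?thesis using a by (metis (no_types, lifting) UnI2 image_eqI lessThan_iff list_decode_inverse)
      next
        case b
        then show ?thesis by (metis UnI1 image_eqI insertI1 list.sel(3) list_decode_inverse)
      qed
    qed
    then show "finite {v \<in> Nu. Eu u v}" by (rule finite_subset) simp
  qed
next
  show "\<forall>u\<in>Nu. Fu u \<subseteq> Domu \<and> finite (Fu u) \<and> card (Fu u) \<le> card Vs"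
    unfolding Fu_def Domu_def Nu_def using fin by (auto intro: card_image_le)
next
  show "\<forall>as. live Ps Iu as \<longrightarrow> (\<exists>u\<in>Nu. set as \<subseteq> Fu u)"
  proof (intro allI impI)
    fix as assume "live Ps Iu as"
    then obtain P where "P \<in> Ps" "as \<in> Iu P" unfolding live_def by blast
    then obtain \<pi> xs where as: "as = map (asg \<pi>) xs" and p: "\<pi> \<in> Paths" and xs: "set xs \<subseteq> Vs"
      unfolding Iu_def by auto
    have "set as \<subseteq> Fu (list_encode \<pi>)" using as xs by (auto simp: Fu_def asg_def)
    moreover have "list_encode \<pi> \<in> Nu" using p by (simp add: Nu_def)
    ultimately show "\<exists>u\<in>Nu. set as \<subseteq> Fu u" by blast
  qed
next
  show "\<forall>a\<in>Domu. connected_in Eu {u \<in> Nu. a \<in> Fu u}"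
  proof
    fix a assume "a \<in> Domu"
    then consider (e) "a = []" | (m) \<pi> x where "a = elem \<pi> x" "\<pi> \<in> Paths" "x \<in> Vs"
      unfolding Domu_def by blast
    then show "connected_in Eu {u \<in> Nu. a \<in> Fu u}"
    proof cases
      case e
      then have "{u \<in> Nu. a \<in> Fu u} = {}" by (auto simp: Fu_def elem_def)
      then show ?thesis unfolding connected_in_def by (simp only:) blast
    next
      case m
      define S where "S = {u \<in> Nu. orig x (list_decode u) = orig x \<pi>}"
      have Seq: "{u \<in> Nu. a \<in> Fu u} = S"
        unfolding S_def Fu_def using m elem_eq by (auto intro!: image_eqI[where x=x])
      show ?thesis unfolding Seq
      proof (rule conn_via[where rt="list_encode (orig x \<pi>)"])
        show "\<And>x y. Eu x y \<Longrightarrow> Eu y x" by (rule Eu_sym)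
        fix u assume "u \<in> S"
        then show "(\<lambda>x y. Eu x y \<and> x \<in> S \<and> y \<in> S)\<^sup>*\<^sup>* (list_encode (orig x \<pi>)) u"
          using orig_reach[OF S_def, of "list_decode u"] by (simp add: S_def Nu_def)
      qed
    qed
  qed
qed

end

theorem corollary2p1:
  fixes \<psi> :: "('v, 'p) lfd" and ar :: "'p \<Rightarrow> nat" and k :: nat
    and V :: "'v set" and \<tau> :: "'p set" and Dom :: "'a set"
    and I :: "'p \<Rightarrow> 'a list set" and A :: "('v \<Rightarrow> 'a) set" and s :: "'v \<Rightarrow> 'a"
  assumes "wf_lfd ar \<psi>"
    and "dep_model ar V \<tau> Dom I A" and "vars \<psi> \<subseteq> V" and "preds \<psi> \<subseteq> \<tau>"
    and "s \<in> A" and "sat A I s \<psi>"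
    and "card (vars \<psi>) = k"
  shows "\<exists>(Dom' :: 'a list set) I' A'.
           dep_model ar (vars \<psi>) (preds \<psi>) Dom' I' A' \<and>
           k_tree_fb k (preds \<psi>) Dom' I' \<and>
           (\<exists>s'\<in>A'. sat A' I' s' \<psi>)"
proof -
  have fin: "finite (vars \<psi>)" by (rule finite_vars)
  obtain f :: "'v \<Rightarrow> nat" where injf: "inj_on f (vars \<psi>)"
    using finite_imp_inj_to_nat_seg[OF fin] by blast
  interpret U: unrav A I s "subs \<psi>" "vars \<psi>" "preds \<psi>" f
    by unfold_locales (use assms(5) injf in auto)
  have tau: "tau_structure ar \<tau> Dom I" using assms(2) by (simp add: dep_model_def)
  have root: "[] \<in> U.Paths" by (simp add: U.Paths_def)
  have "dep_model ar (vars \<psi>) (preds \<psi>) U.Domu U.Iu U.Au"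
    unfolding dep_model_def tau_structure_def
  proof (intro conjI ballI allI impI)
    show "U.Domu \<noteq> {}" by (simp add: U.Domu_def)
  next
    fix P as assume P: "P \<in> preds \<psi>" and as: "as \<in> U.Iu P"
    then obtain \<pi> xs where as: "as = map (U.asg \<pi>) xs" and p: "\<pi> \<in> U.Paths" and xs: "set xs \<subseteq> vars \<psi>"
      and I: "map (U.proj \<pi>) xs \<in> I P"
      unfolding U.Iu_def by auto
    have "P \<in> \<tau>" using P assms(4) by blast
    then have "length (map (U.proj \<pi>) xs) = ar P" using tau I unfolding tau_structure_def by blast
    then show "length as = ar P" using as by simp
    show "set as \<subseteq> U.Domu" using as xs p by (auto simp: U.Domu_def U.asg_def)
  next
    fix P assume "P \<notin> preds \<psi>"
    then show "U.Iu P = {}" by (simp add: U.Iu_def)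
  next
    show "U.Au \<subseteq> vars \<psi> \<rightarrow>\<^sub>E U.Domu"
      by (auto simp: U.Au_def U.asg_def U.Domu_def PiE_def extensional_def) blast
  qed
  moreover have "k_tree_fb k (preds \<psi>) U.Domu U.Iu"
    using U.ktree[OF fin] assms(7) by simp
  moreover have "sat U.Au U.Iu (U.asg []) \<psi>"
    using U.sat_unrav[of \<psi> "[]"] root assms(6) by simp
  moreover have "U.asg [] \<in> U.Au" using root by (simp add: U.Au_def)
  ultimately show ?thesis by blast
qed


end
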